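(* For all integers $n$ and $\alpha$ with $n<\alpha\le 2^n$, there exists a minimal $n$-state nondeterministic finite automaton accepting a prefix-closed language whose equivalent minimal deterministic finite automaton has exactly $\alpha$ states. Moreover, if a minimal $n$-state nondeterministic finite automaton accepts a prefix-closed language whose equivalent minimal deterministic finite automaton has exactly $n$ states, then $n=1$.
   Context: NFAs have a single initial state and a transition function $\delta:Q\times\Sigma\to 2^Q$ that may map to the empty set (no sink state is needed or counted); DFAs are complete, so a sink state is counted. A minimal $n$-state NFA is an NFA with $n$ states such that no NFA with fewer states accepts the same language. A language $L\subseteq\Sigma^*$ is prefix-closed if $xy\in L$ implies $x\in L$ for all $x,y\in\Sigma^*$. *)

theory Defs
  imports Main
begin

record ('q, 'a) nfa =
  nstates :: "'q set"
  ninit   :: "'q"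
  ndelta  :: "'q \<Rightarrow> 'a \<Rightarrow> 'q set"
  nfinal  :: "'q set"

definition nfa_wf :: "'a set \<Rightarrow> ('q, 'a) nfa \<Rightarrow> bool" where
  "nfa_wf \<Sigma> M \<longleftrightarrow> finite (nstates M) \<and> ninit M \<in> nstates M \<and> nfinal M \<subseteq> nstates M \<and>
     (\<forall>q\<in>nstates M. \<forall>a\<in>\<Sigma>. ndelta M q a \<subseteq> nstates M)"

fun nsteps :: "('q \<Rightarrow> 'a \<Rightarrow> 'q set) \<Rightarrow> 'q set \<Rightarrow> 'a list \<Rightarrow> 'q set" where
  "nsteps d S [] = S"
| "nsteps d S (a # w) = nsteps d (\<Union>q\<in>S. d q a) w"

definition nlang :: "'a set \<Rightarrow> ('q, 'a) nfa \<Rightarrow> 'a list set" where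
  "nlang \<Sigma> M = {w \<in> lists \<Sigma>. nsteps (ndelta M) {ninit M} w \<inter> nfinal M \<noteq> {}}"

text \<open>M is a minimal NFA over alphabet \<Sigma>: no NFA with fewer states accepts the same
  language (state sets are arbitrary finite sets of naturals, which covers all NFAs up to renaming).\<close>
definition minimal_nfa :: "'a set \<Rightarrow> ('q, 'a) nfa \<Rightarrow> bool" where
  "minimal_nfa \<Sigma> M \<longleftrightarrow> nfa_wf \<Sigma> M \<and>
     (\<forall>M' :: (nat, 'a) nfa. nfa_wf \<Sigma> M' \<and> nlang \<Sigma> M' = nlang \<Sigma> M \<longrightarrow>
        card (nstates M) \<le> card (nstates M'))"

record ('q, 'a) dfa =
  dstates :: "'q set"
  dinit   :: "'q"
  ddelta  :: "'q \<Rightarrow> 'a \<Rightarrow> 'q"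
  dfinal  :: "'q set"

definition dfa_wf :: "'a set \<Rightarrow> ('q, 'a) dfa \<Rightarrow> bool" where
  "dfa_wf \<Sigma> M \<longleftrightarrow> finite (dstates M) \<and> dinit M \<in> dstates M \<and> dfinal M \<subseteq> dstates M \<and>
     (\<forall>q\<in>dstates M. \<forall>a\<in>\<Sigma>. ddelta M q a \<in> dstates M)"

definition dlang :: "'a set \<Rightarrow> ('q, 'a) dfa \<Rightarrow> 'a list set" where
  "dlang \<Sigma> M = {w \<in> lists \<Sigma>. fold (\<lambda>a q. ddelta M q a) w (dinit M) \<in> dfinal M}"

definition min_dfa_size :: "'a set \<Rightarrow> 'a list set \<Rightarrow> nat" where
  "min_dfa_size \<Sigma> L = (LEAST k. \<exists>M :: (nat, 'a) dfa. dfa_wf \<Sigma> M \<and> dlang \<Sigma> M = L \<and> card (dstates M) = k)"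

definition prefix_closed :: "'a list set \<Rightarrow> bool" where
  "prefix_closed L \<longleftrightarrow> (\<forall>x y. x @ y \<in> L \<longrightarrow> x \<in> L)"

end

theory Submission
  imports Defs
begin


lemma nsteps_empty[simp]: "nsteps d {} w = {}" by (induction w) auto

lemma nsteps_append: "nsteps d S (x@y) = nsteps d (nsteps d S x) y"
  by (induction x arbitrary: S) auto

lemma nsteps_closed: "\<lbrakk>\<forall>q\<in>Q. \<forall>a\<in>\<Sigma>. d q a \<subseteq> Q; S \<subseteq> Q; w \<in> lists \<Sigma>\<rbrakk> \<Longrightarrow> nsteps d S w \<subseteq> Q"
proof (induction w arbitrary: S)
  case (Cons a w)
  have a: "a \<in> \<Sigma>" and w: "w \<in> lists \<Sigma>" using Cons.prems(3) by auto
  have "(\<Union>q\<in>S. d q a) \<subseteq> Q"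
  proof
    fix x assume "x \<in> (\<Union>q\<in>S. d q a)"
    then obtain q where "q \<in> S" "x \<in> d q a" by blast
    then show "x \<in> Q" using Cons.prems(1,2) a by blast
  qed
  then have "nsteps d (\<Union>q\<in>S. d q a) w \<subseteq> Q" using Cons.IH Cons.prems(1) w by blast
  then show ?case by simp
next
  case Nil then show ?case by simp
qed

lemma fold_nsteps: "fold (\<lambda>a S. \<Union>q\<in>S. d q a) w S = nsteps d S w"
  by (induction w arbitrary: S) simp_all

lemma dfa_fold_closed: "dfa_wf \<Sigma> D \<Longrightarrow> p \<in> dstates D \<Longrightarrow> w \<in> lists \<Sigma> \<Longrightarrow>
   fold (\<lambda>a q. ddelta D q a) w p \<in> dstates D"
proof (induction w arbitrary: p)
  case (Cons a w)
  have "ddelta D p a \<in> dstates D" using Cons.prems unfolding dfa_wf_def by simp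
  then show ?case using Cons.IH Cons.prems by simp
qed simp

lemma dfa_to_nat:
  assumes wf: "dfa_wf \<Sigma> (D :: ('q,'a) dfa)"
  shows "\<exists>D' :: (nat,'a) dfa. dfa_wf \<Sigma> D' \<and> dlang \<Sigma> D' = dlang \<Sigma> D \<and> card (dstates D') = card (dstates D)"
proof -
  let ?Q = "dstates D"
  have fin: "finite ?Q" using wf by (simp add: dfa_wf_def)
  then obtain h :: "'q \<Rightarrow> nat" and k where h: "inj_on h ?Q" using finite_imp_inj_to_nat_seg by blast
  define D' where "D' = \<lparr>dstates = h ` ?Q, dinit = h (dinit D),
      ddelta = (\<lambda>p a. h (ddelta D (inv_into ?Q h p) a)), dfinal = h ` dfinal D\<rparr>"
  have fold: "fold (\<lambda>a q. ddelta D' q a) w (h p) = h (fold (\<lambda>a q. ddelta D q a) w p)"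
    if "p \<in> ?Q" "w \<in> lists \<Sigma>" for p w
    using that
  proof (induction w arbitrary: p)
    case (Cons a w)
    have "ddelta D' (h p) a = h (ddelta D p a)" using Cons.prems h by (simp add: D'_def)
    moreover have "ddelta D p a \<in> ?Q" using Cons.prems wf by (auto simp: dfa_wf_def)
    ultimately show ?case using Cons by simp
  qed simp
  have "dfa_wf \<Sigma> D'" using wf h by (auto simp: dfa_wf_def D'_def)
  moreover have "dlang \<Sigma> D' = dlang \<Sigma> D"
  proof -
    have "h (fold (\<lambda>a q. ddelta D q a) w (dinit D)) \<in> h ` dfinal D \<longleftrightarrow>
          fold (\<lambda>a q. ddelta D q a) w (dinit D) \<in> dfinal D" if "w \<in> lists \<Sigma>" for w
      using dfa_fold_closed[OF wf _ that] wf h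
      by (intro inj_on_image_mem_iff[of h ?Q]) (auto simp: dfa_wf_def)
    moreover have "dinit D \<in> ?Q" using wf by (simp add: dfa_wf_def)
    moreover have "dinit D' = h (dinit D)" "dfinal D' = h ` dfinal D" by (simp_all add: D'_def)
    ultimately have "fold (\<lambda>a q. ddelta D' q a) w (dinit D') \<in> dfinal D' \<longleftrightarrow>
          fold (\<lambda>a q. ddelta D q a) w (dinit D) \<in> dfinal D" if "w \<in> lists \<Sigma>" for w
      using fold[of "dinit D" w] that by simp
    then show ?thesis unfolding dlang_def by blast
  qed
  moreover have "card (dstates D') = card ?Q" using h by (simp add: D'_def card_image)
  ultimately show ?thesis by (intro exI[where x=D']) (simp only: simp_thms)
qed

lemma nfa_to_dfa:
  assumes wf: "nfa_wf \<Sigma> (M :: ('q,'a) nfa)"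
  shows "\<exists>D :: (nat,'a) dfa. dfa_wf \<Sigma> D \<and> dlang \<Sigma> D = nlang \<Sigma> M"
proof -
  define D where "D = \<lparr>dstates = Pow (nstates M), dinit = {ninit M},
     ddelta = (\<lambda>S a. \<Union>q\<in>S. ndelta M q a), dfinal = {S\<in>Pow (nstates M). S \<inter> nfinal M \<noteq> {}}\<rparr>"
  have cl: "\<forall>q\<in>nstates M. \<forall>a\<in>\<Sigma>. ndelta M q a \<subseteq> nstates M" using wf by (simp add: nfa_wf_def)
  have wfD: "dfa_wf \<Sigma> D" using wf cl unfolding dfa_wf_def D_def nfa_wf_def
    by auto
  have i: "ninit M \<in> nstates M" using wf by (simp add: nfa_wf_def)
  have "fold (\<lambda>a q. ddelta D q a) w (dinit D) \<in> dfinal D \<longleftrightarrow> nsteps (ndelta M) {ninit M} w \<inter> nfinal M \<noteq> {}"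
    if "w \<in> lists \<Sigma>" for w
    using nsteps_closed[OF cl, of "{ninit M}" w] i that
    by (simp add: D_def fold_nsteps)
  then have "dlang \<Sigma> D = nlang \<Sigma> M"
    unfolding dlang_def nlang_def by blast
  then show ?thesis using dfa_to_nat[OF wfD] by auto
qed



lemma part1:
  fixes n \<alpha> :: nat
  assumes n1: "1 \<le> n" and na: "n < \<alpha>" and a2: "\<alpha> \<le> 2 ^ n"
  shows "\<exists>(\<Sigma> :: nat set) (M :: (nat, nat) nfa).
               finite \<Sigma> \<and> minimal_nfa \<Sigma> M \<and> card (nstates M) = n \<and>
               prefix_closed (nlang \<Sigma> M) \<and> min_dfa_size \<Sigma> (nlang \<Sigma> M) = \<alpha>"
proof -
  define m where "m = \<alpha> - 1"
  have nm: "n \<le> m" and m2: "m \<le> 2 ^ n - 1" and am: "\<alpha> = m + 1" using na a2 unfolding m_def by auto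
  define P where "P = Pow {0..<n} - {{}}"
  define Sing where "Sing = (\<lambda>i. {i}) ` {0..<n}"
  have finP: "finite P" unfolding P_def by simp
  have cP: "card P = 2 ^ n - 1" unfolding P_def by (simp add: card_Pow)
  have cS: "card Sing = n" unfolding Sing_def by (simp add: card_image inj_on_def)
  have SP: "Sing \<subseteq> P" unfolding Sing_def P_def by auto
  have "card (P - Sing) = 2 ^ n - 1 - n" using cP cS SP finP by (simp add: card_Diff_subset finite_subset)
  then have "m - n \<le> card (P - Sing)" using m2 by simp
  then obtain T where T: "T \<subseteq> P - Sing" "card T = m - n" "finite T" by (rule obtain_subset_with_card_n)
  define F where "F = Sing \<union> T"
  have finS: "finite Sing" unfolding Sing_def by simp
  have cF: "card F = m" unfolding F_def using T finS cS nm
    by (subst card_Un_disjoint) auto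
  have FP: "F \<subseteq> P" unfolding F_def using T SP by auto
  have SF: "Sing \<subseteq> F" unfolding F_def by auto
  have finF: "finite F" using FP finP finite_subset by blast
  obtain e where e: "bij_betw e {0..<m} F" using ex_bij_betw_nat_finite[OF finF] cF by metis
  have eF: "e k \<in> F" if "k < m" for k using e that by (auto simp: bij_betw_def)
  have esub: "e k \<subseteq> {0..<n}" "e k \<noteq> {}" if "k < m" for k using eF[OF that] FP unfolding P_def by auto
  have einj: "e k = e l \<Longrightarrow> k < m \<Longrightarrow> l < m \<Longrightarrow> k = l" for k l
    using e by (auto simp: bij_betw_def inj_on_def)
  define \<delta> :: "nat \<Rightarrow> nat \<Rightarrow> nat set" where
    "\<delta> q a = (if a < m then (if q = 0 then e a else {}) else if a < m + n then (if q = a - m then {q} else {}) else {})" for q a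
  define \<Sigma> :: "nat set" where "\<Sigma> = {..m+n}"
  define M :: "(nat,nat) nfa" where "M = \<lparr>nstates = {0..<n}, ninit = 0, ndelta = \<delta>, nfinal = {0..<n}\<rparr>"
  define L where "L = nlang \<Sigma> M"
  define \<sigma> where "\<sigma> u = nsteps \<delta> {0} u" for u
  have dsub: "\<delta> q a \<subseteq> {0..<n}" for q a using esub by (auto simp: \<delta>_def)
  have cl: "\<forall>q\<in>{0..<n}. \<forall>a\<in>\<Sigma>. \<delta> q a \<subseteq> {0..<n}" using dsub by blast
  have n0: "0 \<in> {0..<n}" using n1 by simp
  have \<sigma>sub: "\<sigma> u \<subseteq> {0..<n}" if "u \<in> lists \<Sigma>" for u
    unfolding \<sigma>_def using nsteps_closed[OF cl _ that] n0 by blast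
  have wfM: "nfa_wf \<Sigma> M" unfolding M_def nfa_wf_def using dsub n1 by auto
  have Ldef: "u \<in> L \<longleftrightarrow> u \<in> lists \<Sigma> \<and> \<sigma> u \<noteq> {}" for u
  proof -
    have "u \<in> lists \<Sigma> \<Longrightarrow> (\<sigma> u \<inter> {0..<n} \<noteq> {}) = (\<sigma> u \<noteq> {})" using \<sigma>sub by blast
    then show ?thesis unfolding L_def nlang_def M_def \<sigma>_def by auto
  qed
  have single: "(\<Union>q\<in>S. \<delta> q (m+i)) = (if i \<in> S then {i} else {})" if "i < n" for S i
    using that by (auto simp: \<delta>_def)
  have mem_ext: "(u @ [m+i] \<in> L) = (i \<in> \<sigma> u)" if "u \<in> lists \<Sigma>" "i < n" for u i
  proof -
    have "m + i \<in> \<Sigma>" using that(2) by (simp add: \<Sigma>_def)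
    moreover have "\<sigma> (u @ [m+i]) = (if i \<in> \<sigma> u then {i} else {})"
      unfolding \<sigma>_def nsteps_append using single[OF that(2)] by simp
    ultimately show ?thesis using Ldef that(1) by auto
  qed
  have disting: "\<exists>v\<in>lists \<Sigma>. (u1 @ v \<in> L) \<noteq> (u2 @ v \<in> L)"
    if h1: "u1 \<in> lists \<Sigma>" and h2: "u2 \<in> lists \<Sigma>" and h3: "\<sigma> u1 \<noteq> \<sigma> u2" for u1 u2
  proof -
    obtain i where i: "(i \<in> \<sigma> u1) \<noteq> (i \<in> \<sigma> u2)" using h3 by blast
    then have "i < n" using \<sigma>sub[OF h1] \<sigma>sub[OF h2] by auto
    then have "[m+i] \<in> lists \<Sigma>" by (simp add: \<Sigma>_def)
    with mem_ext[OF h1 \<open>i < n\<close>] mem_ext[OF h2 \<open>i < n\<close>] i show ?thesis by blast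
  qed
  have pc: "prefix_closed L"
    unfolding prefix_closed_def
  proof (intro allI impI)
    fix x y assume "x @ y \<in> L"
    then have "x @ y \<in> lists \<Sigma>" "\<sigma> (x @ y) \<noteq> {}" using Ldef by auto
    then have "x \<in> lists \<Sigma>" "nsteps \<delta> (\<sigma> x) y \<noteq> {}" unfolding \<sigma>_def nsteps_append by auto
    then show "x \<in> L" using Ldef by fastforce
  qed
  have minM: "minimal_nfa \<Sigma> M"
    unfolding minimal_nfa_def
  proof (intro conjI allI impI)
    show "nfa_wf \<Sigma> M" by (rule wfM)
    fix M' :: "(nat,nat) nfa" assume "nfa_wf \<Sigma> M' \<and> nlang \<Sigma> M' = nlang \<Sigma> M"
    then have wf': "nfa_wf \<Sigma> M'" and L': "nlang \<Sigma> M' = L" by (auto simp: L_def)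
    define k where "k i = inv_into {0..<m} e {i}" for i
    have eim: "e ` {0..<m} = F" using e by (simp add: bij_betw_def)
    have k: "k i < m \<and> e (k i) = {i}" if "i < n" for i
    proof -
      have "{i} \<in> F" using SF that unfolding Sing_def by auto
      then have "{i} \<in> e ` {0..<m}" using eim by simp
      then show ?thesis unfolding k_def using inv_into_into[of "{i}" e "{0..<m}"] f_inv_into_f[of "{i}" e "{0..<m}"] by auto
    qed
    have k\<Sigma>: "[k i] \<in> lists \<Sigma>" if "i < n" for i using k[OF that] by (simp add: \<Sigma>_def)
    have \<sigma>k: "\<sigma> [k i] = {i}" if "i < n" for i using k[OF that] by (simp add: \<sigma>_def \<delta>_def)
    have inL: "([k i] @ [m+j] \<in> L) = (i = j)" if "i < n" "j < n" for i j
      using mem_ext[OF k\<Sigma>[OF that(1)] that(2)] \<sigma>k[OF that(1)] by auto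
    define X where "X i = nsteps (ndelta M') {ninit M'} [k i]" for i
    have mj: "[m+j] \<in> lists \<Sigma>" if "j < n" for j using that by (simp add: \<Sigma>_def)
    have ex: "\<exists>p. p \<in> nstates M' \<and> p \<in> X i \<and> ndelta M' p (m+i) \<inter> nfinal M' \<noteq> {}" if "i < n" for i
    proof -
      have "[k i] @ [m+i] \<in> nlang \<Sigma> M'" using inL[OF that that] L' by simp
      then have "nsteps (ndelta M') (X i) [m+i] \<inter> nfinal M' \<noteq> {}" unfolding nlang_def X_def nsteps_append by simp
      then obtain p where "p \<in> X i" "ndelta M' p (m+i) \<inter> nfinal M' \<noteq> {}" by auto
      moreover have "X i \<subseteq> nstates M'"
        using nsteps_closed[of "nstates M'" \<Sigma> "ndelta M'" "{ninit M'}" "[k i]"] wf' k\<Sigma>[OF that]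
        unfolding X_def nfa_wf_def by auto
      ultimately show ?thesis by blast
    qed
    then have "\<forall>i. \<exists>p. i < n \<longrightarrow> p \<in> nstates M' \<and> p \<in> X i \<and> ndelta M' p (m+i) \<inter> nfinal M' \<noteq> {}" by blast
    then obtain p where p: "\<And>i. i < n \<Longrightarrow> p i \<in> nstates M' \<and> p i \<in> X i \<and> ndelta M' (p i) (m+i) \<inter> nfinal M' \<noteq> {}"
      by metis
    have "inj_on p {0..<n}"
    proof (rule inj_onI)
      fix i j assume i: "i \<in> {0..<n}" and j: "j \<in> {0..<n}" and pij: "p i = p j"
      then have "ndelta M' (p i) (m+j) \<inter> nfinal M' \<noteq> {}" using p by auto
      moreover have "p i \<in> X i" using p i by auto
      ultimately have "nsteps (ndelta M') (X i) [m+j] \<inter> nfinal M' \<noteq> {}" by auto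
      then have "[k i] @ [m+j] \<in> nlang \<Sigma> M'" unfolding nlang_def X_def nsteps_append
        using k\<Sigma> mj i j by simp
      then show "i = j" using inL L' i j by auto
    qed
    moreover have "p ` {0..<n} \<subseteq> nstates M'" using p by auto
    moreover have "finite (nstates M')" using wf' by (simp add: nfa_wf_def)
    ultimately have "card {0..<n} \<le> card (nstates M')" by (metis card_inj_on_le)
    then show "card (nstates M) \<le> card (nstates M')" by (simp add: M_def)
  qed
  have dfa: "min_dfa_size \<Sigma> L = \<alpha>"
    unfolding min_dfa_size_def
  proof (rule Least_equality)
    show "\<exists>D::(nat,nat) dfa. dfa_wf \<Sigma> D \<and> dlang \<Sigma> D = L \<and> card (dstates D) = \<alpha>"
    proof -
      define D where "D = \<lparr>dstates = insert {} F, dinit = {0::nat}, ddelta = (\<lambda>S a. \<Union>q\<in>S. \<delta> q a), dfinal = F\<rparr>"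
      have Fsub: "S \<subseteq> {0..<n}" if "S \<in> F" for S using that FP unfolding P_def by auto
      have clos: "(\<Union>q\<in>S. \<delta> q a) \<in> insert {} F" if "S \<in> insert {} F" for S a
      proof -
        consider "a < m" | "m \<le> a \<and> a < m+n" | "m + n \<le> a" by linarith
        then show ?thesis
        proof cases
          case 1 then have "(\<Union>q\<in>S. \<delta> q a) = (if 0 \<in> S then e a else {})" by (auto simp: \<delta>_def)
          then show ?thesis using eF 1 by auto
        next
          case 2 then obtain i where i: "a = m + i" "i < n" by (metis add_less_cancel_left le_Suc_ex)
          then have "(\<Union>q\<in>S. \<delta> q a) = (if i \<in> S then {i} else {})" using single by simp
          moreover have "{i} \<in> F" using SF i(2) unfolding Sing_def by auto
          ultimately show ?thesis by auto
        next
          case 3 then have "(\<Union>q\<in>S. \<delta> q a) = {}" by (auto simp: \<delta>_def)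
          then show ?thesis by simp
        qed
      qed
      have "{0} \<in> F" using SF n1 unfolding Sing_def by auto
      then have wfD: "dfa_wf \<Sigma> D" unfolding dfa_wf_def D_def using finF clos by auto
      have nF: "{} \<notin> F" using FP unfolding P_def by auto
      have "dlang \<Sigma> D = L"
      proof -
        have "fold (\<lambda>a q. ddelta D q a) w (dinit D) \<in> dfinal D \<longleftrightarrow> \<sigma> w \<noteq> {}" if "w \<in> lists \<Sigma>" for w
        proof -
          have "fold (\<lambda>a q. ddelta D q a) w (dinit D) \<in> dstates D"
            using dfa_fold_closed[OF wfD _ that] wfD by (simp add: dfa_wf_def)
          moreover have "fold (\<lambda>a q. ddelta D q a) w (dinit D) = \<sigma> w" by (simp add: D_def \<sigma>_def fold_nsteps)
          ultimately show ?thesis using nF by (auto simp: D_def)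
        qed
        then show ?thesis unfolding dlang_def using Ldef by blast
      qed
      moreover have "card (dstates D) = \<alpha>" using finF nF cF am by (simp add: D_def)
      ultimately show ?thesis using dfa_to_nat[OF wfD] by metis
    qed
  next
    fix y assume "\<exists>D::(nat,nat) dfa. dfa_wf \<Sigma> D \<and> dlang \<Sigma> D = L \<and> card (dstates D) = y"
    then obtain D :: "(nat,nat) dfa" where D: "dfa_wf \<Sigma> D" "dlang \<Sigma> D = L" "card (dstates D) = y" by blast
    define u where "u j = (if j < m then [j] else [m+n])" for j
    have u\<Sigma>: "u j \<in> lists \<Sigma>" for j by (simp add: u_def \<Sigma>_def)
    have \<sigma>u: "\<sigma> (u j) = (if j < m then e j else {})" for j by (simp add: u_def \<sigma>_def \<delta>_def)
    define r where "r j = fold (\<lambda>a q. ddelta D q a) (u j) (dinit D)" for j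
    have init: "dinit D \<in> dstates D" using D(1) by (simp add: dfa_wf_def)
    have "inj_on r {..m}"
    proof (rule inj_onI)
      fix j l assume j: "j \<in> {..m}" and l: "l \<in> {..m}" and rjl: "r j = r l"
      have same: "(u j @ v \<in> L) = (u l @ v \<in> L)" if "v \<in> lists \<Sigma>" for v
        using rjl u\<Sigma>[of j] u\<Sigma>[of l] that unfolding D(2)[symmetric] dlang_def r_def by simp
      have "\<sigma> (u j) = \<sigma> (u l)" using disting[OF u\<Sigma> u\<Sigma>] same by blast
      then show "j = l" using \<sigma>u[of j] \<sigma>u[of l] esub(2) einj j l by (auto split: if_splits) (metis esub(2))
    qed
    moreover have "r ` {..m} \<subseteq> dstates D" using dfa_fold_closed[OF D(1) init u\<Sigma>] r_def by auto
    moreover have "finite (dstates D)" using D(1) by (simp add: dfa_wf_def)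
    ultimately have "card {..m} \<le> card (dstates D)" by (metis card_inj_on_le)
    then show "\<alpha> \<le> y" using D(3) am by simp
  qed
  have "card (nstates M) = n" by (simp add: M_def)
  moreover have "finite \<Sigma>" by (simp add: \<Sigma>_def)
  ultimately show ?thesis using minM pc dfa unfolding L_def by blast
qed



lemma nsteps_const: "nsteps (\<lambda>_ _. {0::nat}) {0} w = {0}"
  by (induction w) simp_all

lemma part2:
  fixes M :: "('q,'a) nfa"
  assumes min: "minimal_nfa \<Sigma> M" and pc: "prefix_closed (nlang \<Sigma> M)"
    and sz: "min_dfa_size \<Sigma> (nlang \<Sigma> M) = card (nstates M)"
  shows "card (nstates M) = 1"
proof -
  define L where "L = nlang \<Sigma> M"
  define n where "n = card (nstates M)"
  have wf: "nfa_wf \<Sigma> M" using min by (simp add: minimal_nfa_def)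
  have n1: "1 \<le> n" unfolding n_def using wf
    by (metis One_nat_def Suc_leI card_gt_0_iff empty_iff nfa_wf_def)
  have le: "n \<le> card (nstates M')" if "nfa_wf \<Sigma> M'" "nlang \<Sigma> M' = L" for M' :: "(nat,'a) nfa"
    using min that unfolding minimal_nfa_def n_def L_def by blast
  have Lsub: "L \<subseteq> lists \<Sigma>" unfolding L_def nlang_def by blast
  show ?thesis
  proof (cases "L = {}")
    case True
    define M1 where "M1 = \<lparr>nstates = {0::nat}, ninit = 0, ndelta = (\<lambda>(_::nat) (_::'a). {}), nfinal = {}\<rparr>"
    have "nfa_wf \<Sigma> M1" by (simp add: M1_def nfa_wf_def)
    moreover have "nlang \<Sigma> M1 = L" using True by (simp add: M1_def nlang_def)
    ultimately have "n \<le> 1" using le by (fastforce simp: M1_def)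
    then show ?thesis using n1 n_def by simp
  next
    case nonempty: False
    show ?thesis
    proof (cases "L = lists \<Sigma>")
      case True
      define M1 where "M1 = \<lparr>nstates = {0::nat}, ninit = 0, ndelta = (\<lambda>(_::nat) (_::'a). {0}), nfinal = {0}\<rparr>"
      have "nfa_wf \<Sigma> M1" by (simp add: M1_def nfa_wf_def)
      moreover have "nlang \<Sigma> M1 = L" using True by (simp add: M1_def nlang_def nsteps_const)
      ultimately have "n \<le> 1" using le by (fastforce simp: M1_def)
      then show ?thesis using n1 n_def by simp
    next
      case False
      have ex: "\<exists>k. \<exists>D :: (nat,'a) dfa. dfa_wf \<Sigma> D \<and> dlang \<Sigma> D = L \<and> card (dstates D) = k"
        using nfa_to_dfa[OF wf] unfolding L_def by blast
      have "\<exists>D :: (nat,'a) dfa. dfa_wf \<Sigma> D \<and> dlang \<Sigma> D = L \<and> card (dstates D) = min_dfa_size \<Sigma> L"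
        unfolding min_dfa_size_def by (rule LeastI_ex[OF ex])
      then obtain D :: "(nat,'a) dfa" where D: "dfa_wf \<Sigma> D" "dlang \<Sigma> D = L" "card (dstates D) = n"
        using sz unfolding L_def n_def by auto
      let ?f = "\<lambda>v p. fold (\<lambda>a q. ddelta D q a) v p"
      obtain w where w: "w \<in> lists \<Sigma>" "w \<notin> L" using False Lsub by blast
      obtain x where "x \<in> L" using nonempty by blast
      then have eps: "[] \<in> L" using pc unfolding prefix_closed_def L_def by (metis append_Nil)
      have init: "dinit D \<in> dstates D" using D(1) by (simp add: dfa_wf_def)
      define q where "q = ?f w (dinit D)"
      have qD: "q \<in> dstates D" unfolding q_def by (rule dfa_fold_closed[OF D(1) init w(1)])
      have qF: "q \<notin> dfinal D" using w D(2) unfolding q_def dlang_def by blast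
      have iF: "dinit D \<in> dfinal D" using eps D(2) unfolding dlang_def by auto
      have dead: "?f v q \<notin> dfinal D" if "v \<in> lists \<Sigma>" for v
      proof
        assume "?f v q \<in> dfinal D"
        then have "w @ v \<in> dlang \<Sigma> D" using w(1) that unfolding dlang_def q_def by simp
        then have "w \<in> L" using D(2) pc unfolding prefix_closed_def L_def by blast
        then show False using w(2) by blast
      qed
      define N where "N = \<lparr>nstates = dstates D - {q}, ninit = dinit D,
          ndelta = (\<lambda>p a. {ddelta D p a} - {q}), nfinal = dfinal D\<rparr>"
      have wfN: "nfa_wf \<Sigma> N" using D(1) qF iF unfolding N_def nfa_wf_def dfa_wf_def by auto
      have key: "(nsteps (\<lambda>p a. {ddelta D p a} - {q}) {p} v \<inter> dfinal D \<noteq> {}) = (?f v p \<in> dfinal D)"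
        if "p \<in> dstates D" "p \<noteq> q" "v \<in> lists \<Sigma>" for p v
        using that
      proof (induction v arbitrary: p)
        case Nil then show ?case by simp
      next
        case (Cons a v)
        have a: "a \<in> \<Sigma>" and v: "v \<in> lists \<Sigma>" using Cons.prems(3) by auto
        have st: "nsteps (\<lambda>p a. {ddelta D p a} - {q}) {p} (a # v) =
                  nsteps (\<lambda>p a. {ddelta D p a} - {q}) ({ddelta D p a} - {q}) v" by simp
        show ?case
        proof (cases "ddelta D p a = q")
          case True
          then show ?thesis using st dead[OF v] by simp
        next
          case False
          have "ddelta D p a \<in> dstates D" using D(1) Cons.prems(1) a by (simp add: dfa_wf_def)
          then show ?thesis using st False Cons.IH[of "ddelta D p a"] v by simp
        qed
      qed
      have "nlang \<Sigma> N = L"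
      proof -
        have "nsteps (ndelta N) {ninit N} v \<inter> nfinal N \<noteq> {} \<longleftrightarrow> ?f v (dinit D) \<in> dfinal D"
          if "v \<in> lists \<Sigma>" for v
          using key[OF init _ that] iF qF by (auto simp: N_def)
        then show ?thesis using D(2) unfolding nlang_def dlang_def by blast
      qed
      then have "n \<le> card (nstates N)" using le wfN by blast
      also have "card (nstates N) = n - 1" using qD D(3) by (simp add: N_def)
      finally show ?thesis using n1 by simp
    qed
  qed
qed


theorem mainTheorem9:
  shows "(\<forall>n \<alpha> :: nat. 1 \<le> n \<and> n < \<alpha> \<and> \<alpha> \<le> 2 ^ n \<longrightarrow>
            (\<exists>(\<Sigma> :: nat set) (M :: (nat, nat) nfa).
               finite \<Sigma> \<and> minimal_nfa \<Sigma> M \<and> card (nstates M) = n \<and>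
               prefix_closed (nlang \<Sigma> M) \<and> min_dfa_size \<Sigma> (nlang \<Sigma> M) = \<alpha>))
       \<and> (\<forall>(\<Sigma> :: 'a set) (M :: ('q, 'a) nfa) (n :: nat).
            finite \<Sigma> \<and> minimal_nfa \<Sigma> M \<and> card (nstates M) = n \<and>
            prefix_closed (nlang \<Sigma> M) \<and> min_dfa_size \<Sigma> (nlang \<Sigma> M) = n \<longrightarrow> n = 1)"
  using part1 part2 by blast

end
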